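(* Let $P, Q \subseteq \mathbb{R}^d$ be semi-rational polytopes, each of codimension $0$ or $1$. Suppose that $L_{P+w}(s) = L_{Q+w}(s)$ for all integer vectors $w \in \mathbb{Z}^d$ and all real $s > 0$. Then $P = Q$.
   Context: For a polytope $P \subseteq \mathbb{R}^d$ and real $s \ge 0$, the real Ehrhart function is $L_P(s) = \#(sP \cap \mathbb{Z}^d)$, where $sP = \{sx : x \in P\}$. A polytope $P \subseteq \mathbb{R}^d$ is semi-rational if it can be written as $P = \bigcap_{i=1}^n \{x \in \mathbb{R}^d : \langle a_i, x\rangle \le b_i\}$ with all $a_i \in \mathbb{Z}^d$ and all $b_i \in \mathbb{R}$ arbitrary. *)

theory Defs
  imports "HOL-Analysis.Analysis"
begin

definition int_vec :: "real^'n \<Rightarrow> bool" where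
  "int_vec x \<longleftrightarrow> (\<forall>i. x $ i \<in> \<int>)"

definition ehrhart :: "(real^'n) set \<Rightarrow> real \<Rightarrow> nat" where
  "ehrhart P s = card {x \<in> (\<lambda>y. s *\<^sub>R y) ` P. int_vec x}"

definition semi_rational :: "(real^'n) set \<Rightarrow> bool" where
  "semi_rational P \<longleftrightarrow> polytope P \<and>
     (\<exists>F :: ((real^'n) \<times> real) set. finite F \<and> (\<forall>(a,b)\<in>F. int_vec a) \<and>
        P = {x. \<forall>(a,b)\<in>F. a \<bullet> x \<le> b})"

definition codim :: "(real^'n) set \<Rightarrow> int" where
  "codim P = int CARD('n) - aff_dim P"

end

theory Submission
  imports Defs
begin

lemma floor_approx:
  fixes a :: real
  shows "(\<lambda>N::nat. (1 / real N) * real_of_int \<lfloor>real N * a\<rfloor>) \<longlonglongrightarrow> a"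
proof -
  have "(\<lambda>N::nat. (1 / real N) * real_of_int \<lfloor>real N * a\<rfloor> - a) \<longlonglongrightarrow> 0"
  proof (rule Lim_null_comparison)
    show "\<forall>\<^sub>F N in sequentially. norm ((1 / real N) * real_of_int \<lfloor>real N * a\<rfloor> - a) \<le> 1 / real N"
    proof (rule eventually_sequentiallyI[of 1])
      fix N :: nat assume "1 \<le> N"
      hence N: "real N > 0" by simp
      have f1: "real_of_int \<lfloor>real N * a\<rfloor> \<le> real N * a" by linarith
      have f2: "real N * a < real_of_int \<lfloor>real N * a\<rfloor> + 1" by linarith
      have "(1 / real N) * real_of_int \<lfloor>real N * a\<rfloor> - a = (real_of_int \<lfloor>real N * a\<rfloor> - real N * a) / real N"
        using N by (simp add: field_simps)
      moreover have "\<bar>real_of_int \<lfloor>real N * a\<rfloor> - real N * a\<bar> \<le> 1" using f1 f2 by linarith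
      ultimately show "norm ((1 / real N) * real_of_int \<lfloor>real N * a\<rfloor> - a) \<le> 1 / real N"
        using N by (simp add: abs_divide divide_right_mono)
    qed
    show "(\<lambda>N::nat. 1 / real N) \<longlonglongrightarrow> 0" by (rule lim_const_over_n)
  qed
  then show ?thesis by (simp add: LIM_zero_iff)
qed

lemma vec_approx:
  fixes x :: "real^'n"
  shows "(\<lambda>N::nat. (1 / real N) *\<^sub>R (\<chi> i. real_of_int \<lfloor>real N * x$i\<rfloor>)) \<longlonglongrightarrow> x"
proof (rule vec_tendstoI)
  fix i
  have "(\<lambda>N::nat. real_of_int \<lfloor>real N * x$i\<rfloor> / real N) \<longlonglongrightarrow> x$i"
    using floor_approx[of "x$i"] by simp
  then show "(\<lambda>N::nat. ((1 / real N) *\<^sub>R (\<chi> i. real_of_int \<lfloor>real N * x$i\<rfloor>)) $ i) \<longlonglongrightarrow> x$i"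
    by simp
qed

lemma int_vec_floor: "int_vec (\<chi> i. real_of_int (f i) :: real^'n)"
  by (simp add: int_vec_def)

lemma int_vec_norm:
  fixes u :: "real^'n"
  assumes "int_vec u" "u \<noteq> 0"
  shows "norm u \<ge> 1"
proof -
  obtain i where "u$i \<noteq> 0" using assms(2) by (metis vec_eq_iff zero_index)
  moreover have "u$i \<in> \<int>" using assms(1) int_vec_def by blast
  ultimately have "\<bar>u$i\<bar> \<ge> 1"
  proof -
    assume a: "u$i \<noteq> 0" "u$i \<in> \<int>"
    then obtain k where k: "u$i = real_of_int k" by (auto elim: Ints_cases)
    hence "k \<noteq> 0" using a by auto
    hence "\<bar>k\<bar> \<ge> 1" by linarith
    hence "real_of_int \<bar>k\<bar> \<ge> 1" by linarith
    thus ?thesis using k by simp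
  qed
  thus ?thesis using component_le_norm_cart[of u i] by linarith
qed

lemma int_vec_diff: "int_vec u \<Longrightarrow> int_vec v \<Longrightarrow> int_vec (u - v)"
  by (simp add: int_vec_def)

lemma int_vec_add: "int_vec u \<Longrightarrow> int_vec v \<Longrightarrow> int_vec (u + v)"
  by (simp add: int_vec_def)

lemma int_vec_nat_scale: "int_vec u \<Longrightarrow> int_vec (real M *\<^sub>R u)"
  by (simp add: int_vec_def)

definition SS :: "(real^'n) set" where
  "SS = {y. \<exists>r v z. int_vec v \<and> int_vec z \<and> y = r *\<^sub>R v + z}"

lemma ehrhart_point:
  fixes P :: "(real^'n) set"
  assumes PR: "\<forall>p\<in>P. norm p \<le> R" and v: "int_vec v" and t: "t > 0" "t > R + norm y"
    and e: "t *\<^sub>R v - w = y"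
  shows "ehrhart ((\<lambda>x. x + w) ` P) (1/t) = (if y \<in> P then 1 else 0)"
proof -
  have yw: "y + w = t *\<^sub>R v" using e by (metis diff_add_cancel)
  have eq: "{x \<in> (\<lambda>y. (1/t) *\<^sub>R y) ` ((\<lambda>x. x + w) ` P). int_vec x} = (if y \<in> P then {v} else {})"
  proof (intro equalityI subsetI)
    fix x assume "x \<in> {x \<in> (\<lambda>y. (1/t) *\<^sub>R y) ` ((\<lambda>x. x + w) ` P). int_vec x}"
    then obtain p where p: "p \<in> P" "x = (1/t) *\<^sub>R (p + w)" and xi: "int_vec x" by auto
    have "t *\<^sub>R x = p + w" using p(2) t by simp
    hence pe: "p = t *\<^sub>R x - w" by (metis add_diff_cancel)
    have "x = v"
    proof (rule ccontr)
      assume xv: "x \<noteq> v"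
      have n1: "norm (x - v) \<ge> 1" using int_vec_norm[OF int_vec_diff[OF xi v]] xv by simp
      have "t *\<^sub>R (x - v) = p - y" using pe e by (simp add: algebra_simps)
      hence n2: "norm (t *\<^sub>R (x - v)) \<le> norm p + norm y" by (metis norm_triangle_ineq4)
      have n3: "norm (t *\<^sub>R (x - v)) = t * norm (x - v)" using t by simp
      have "t \<le> t * norm (x - v)" using mult_left_mono[OF n1, of t] t by simp
      hence "norm p > R" using n2 n3 t by linarith
      thus False using PR p(1) by force
    qed
    hence "p = y" using pe e by simp
    thus "x \<in> (if y \<in> P then {v} else {})" using p(1) \<open>x = v\<close> by simp
  next
    fix x assume "x \<in> (if y \<in> P then {v} else {})"
    hence x: "y \<in> P" "x = v" by (auto split: if_splits)
    have "(1/t) *\<^sub>R (y + w) = v" using yw t by simp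
    hence "x = (1/t) *\<^sub>R (y + w)" using x(2) by simp
    hence "x \<in> (\<lambda>y. (1/t) *\<^sub>R y) ` ((\<lambda>x. x + w) ` P)" using x(1) by blast
    thus "x \<in> {x \<in> (\<lambda>y. (1/t) *\<^sub>R y) ` ((\<lambda>x. x + w) ` P). int_vec x}"
      using x(2) v by blast
  qed
  show ?thesis unfolding ehrhart_def eq by simp
qed

lemma approx_aff:
  fixes A :: "(real^'n) set"
  assumes dim: "aff_dim A \<ge> int CARD('n) - 1" and p: "p \<in> affine hull A" and d: "\<delta> > 0"
  shows "\<exists>q\<in>SS. q \<in> affine hull A \<and> dist q p < \<delta>"
proof -
  have "aff_dim A \<le> int CARD('n)" using aff_dim_le_DIM[of A] by simp
  hence "aff_dim A = int CARD('n) \<or> aff_dim A = int CARD('n) - 1" using dim by linarith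
  thus ?thesis
  proof
    assume "aff_dim A = int CARD('n)"
    hence U: "affine hull A = UNIV" using aff_dim_eq_full[of A] by simp
    define u where "u = (\<lambda>N::nat. (1 / real N) *\<^sub>R (\<chi> i. real_of_int \<lfloor>real N * p$i\<rfloor>) :: real^'n)"
    have "u \<longlonglongrightarrow> p" unfolding u_def by (rule vec_approx)
    hence "\<forall>\<^sub>F N in sequentially. dist (u N) p < \<delta>" using d by (rule tendstoD)
    then obtain N0 where N0: "\<forall>n\<ge>N0. dist (u n) p < \<delta>" unfolding eventually_sequentially by blast
    define N where "N = N0"
    have N: "dist (u N) p < \<delta>" using N0 unfolding N_def by auto
    have "u N \<in> SS" unfolding SS_def u_def
      by (rule CollectI, rule exI[of _ "1 / real N"],
          rule exI[of _ "\<chi> i. real_of_int \<lfloor>real N * p$i\<rfloor>"], rule exI[of _ 0])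
         (simp add: int_vec_def)
    thus ?thesis using N U by auto
  next
    assume "aff_dim A = int CARD('n) - 1"
    then obtain c \<beta> where c: "c \<noteq> 0" and H: "affine hull A = {x. c \<bullet> x = \<beta>}"
      using aff_dim_eq_hyperplane[of A] by auto
    obtain z :: "real^'n" where zi: "int_vec z" and zc: "c \<bullet> z \<noteq> \<beta>"
    proof (cases "\<beta> = 0")
      case False
      then show ?thesis using that[of 0] by (simp add: int_vec_def)
    next
      case True
      obtain i where "c$i \<noteq> 0" using c by (metis vec_eq_iff zero_index)
      moreover have "int_vec (axis i 1 :: real^'n)" by (simp add: int_vec_def axis_def)
      ultimately show ?thesis using that[of "axis i 1"] True by (simp add: inner_axis)
    qed
    define v0 where "v0 = p - z"
    define \<gamma> where "\<gamma> = \<beta> - c \<bullet> z"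
    have g: "\<gamma> \<noteq> 0" using zc \<gamma>_def by simp
    have cv0: "c \<bullet> v0 = \<gamma>" using p H unfolding v0_def \<gamma>_def by (simp add: inner_diff_right)
    define u where "u = (\<lambda>N::nat. (1 / real N) *\<^sub>R (\<chi> i. real_of_int \<lfloor>real N * v0$i\<rfloor>) :: real^'n)"
    have uL: "u \<longlonglongrightarrow> v0" unfolding u_def by (rule vec_approx)
    have cu: "(\<lambda>N. c \<bullet> u N) \<longlonglongrightarrow> \<gamma>" unfolding cv0[symmetric] by (intro tendsto_intros uL)
    have fL: "(\<lambda>N. z + (\<gamma> / (c \<bullet> u N)) *\<^sub>R u N) \<longlonglongrightarrow> z + (\<gamma> / \<gamma>) *\<^sub>R v0"
      by (intro tendsto_intros cu uL g)
    hence fL': "(\<lambda>N. z + (\<gamma> / (c \<bullet> u N)) *\<^sub>R u N) \<longlonglongrightarrow> p" using g v0_def by simp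
    have e1: "\<forall>\<^sub>F N in sequentially. dist (z + (\<gamma> / (c \<bullet> u N)) *\<^sub>R u N) p < \<delta>"
      using fL' d by (rule tendstoD)
    have e2: "\<forall>\<^sub>F N in sequentially. c \<bullet> u N \<noteq> 0"
      using cu g by (rule tendsto_imp_eventually_ne)
    obtain N0 where N0: "\<forall>n\<ge>N0. dist (z + (\<gamma> / (c \<bullet> u n)) *\<^sub>R u n) p < \<delta> \<and> c \<bullet> u n \<noteq> 0"
      using eventually_conj[OF e1 e2] unfolding eventually_sequentially by blast
    define N where "N = N0"
    have N1: "dist (z + (\<gamma> / (c \<bullet> u N)) *\<^sub>R u N) p < \<delta>" and N2: "c \<bullet> u N \<noteq> 0"
      using N0 unfolding N_def by auto
    define V where "V = ((\<chi> i. real_of_int \<lfloor>real N * v0$i\<rfloor>) :: real^'n)"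
    define a where "a = \<gamma> / (c \<bullet> u N)"
    define q where "q = z + a *\<^sub>R u N"
    have uN: "u N = (1 / real N) *\<^sub>R V" unfolding u_def V_def by (rule refl)
    have qeq: "q = (a * (1 / real N)) *\<^sub>R V + z" unfolding q_def uN
      by (metis scaleR_scaleR add.commute)
    have qS: "q \<in> SS" unfolding SS_def
      by (intro CollectI exI[of _ "a * (1 / real N)"] exI[of _ V] exI[of _ z] conjI qeq zi)
         (unfold V_def, rule int_vec_floor)
    have "c \<bullet> q = c \<bullet> z + a * (c \<bullet> u N)" unfolding q_def
      by (simp only: inner_add_right inner_scaleR_right)
    also have "\<dots> = c \<bullet> z + \<gamma>" unfolding a_def using N2 by simp
    also have "\<dots> = \<beta>" unfolding \<gamma>_def by simp
    finally have cq: "c \<bullet> q = \<beta>" .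
    have qA: "q \<in> affine hull A" using H cq by simp
    have "dist q p < \<delta>" using N1 unfolding q_def a_def .
    thus ?thesis using qS qA by blast
  qed
qed

lemma dense_SS:
  fixes P :: "(real^'n) set"
  assumes "polytope P" "aff_dim P \<ge> int CARD('n) - 1"
  shows "P \<subseteq> closure (P \<inter> SS)"
proof -
  have cl: "closed P" using polytope_imp_compact[OF assms(1)] compact_imp_closed by blast
  have cv: "convex P" using assms(1) polytope_imp_convex by blast
  have "rel_interior P \<subseteq> closure (P \<inter> SS)"
  proof
    fix p assume "p \<in> rel_interior P"
    then obtain e where e: "e > 0" "ball p e \<inter> affine hull P \<subseteq> P" and pP: "p \<in> P"
      using mem_rel_interior_ball by blast
    have "\<forall>\<epsilon>>0. \<exists>y\<in>P \<inter> SS. dist y p < \<epsilon>"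
    proof (intro allI impI)
      fix \<epsilon> :: real assume "\<epsilon> > 0"
      then obtain q where q: "q \<in> SS" "q \<in> affine hull P" "dist q p < min e \<epsilon>"
        using approx_aff[OF assms(2) hull_subset[THEN subsetD, OF pP], of "min e \<epsilon>"] e by auto
      hence "q \<in> ball p e" by (simp add: dist_commute)
      hence "q \<in> P" using e q by blast
      thus "\<exists>y\<in>P \<inter> SS. dist y p < \<epsilon>" using q by auto
    qed
    thus "p \<in> closure (P \<inter> SS)" by (simp add: closure_approachable)
  qed
  hence h: "closure (rel_interior P) \<subseteq> closure (P \<inter> SS)"
    by (rule closure_minimal[OF _ closed_closure])
  have c1: "closure (rel_interior P) = P"
    using convex_closure_rel_interior[OF cv] closure_closed[OF cl] by (rule trans)
  show ?thesis using h c1 by blast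
qed

theorem theorem4:
  fixes P Q :: "(real^'n) set"
  assumes "semi_rational P" and "semi_rational Q"
    and "codim P \<in> {0, 1}" and "codim Q \<in> {0, 1}"
    and "\<And>w s. int_vec w \<Longrightarrow> s > 0 \<Longrightarrow>
           ehrhart ((\<lambda>x. x + w) ` P) s = ehrhart ((\<lambda>x. x + w) ` Q) s"
  shows "P = Q"
proof -
  have pP: "polytope P" and pQ: "polytope Q" using assms(1,2) semi_rational_def by auto
  have clP: "closed P" and clQ: "closed Q"
    using polytope_imp_compact[OF pP] polytope_imp_compact[OF pQ] compact_imp_closed by auto
  have "bounded (P \<union> Q)"
    using polytope_imp_compact[OF pP] polytope_imp_compact[OF pQ] compact_imp_bounded by auto
  then obtain R where R: "R > 0" "\<forall>x\<in>P \<union> Q. norm x \<le> R" using bounded_pos by blast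
  have dP: "aff_dim P \<ge> int CARD('n) - 1" and dQ: "aff_dim Q \<ge> int CARD('n) - 1"
    using assms(3,4) unfolding codim_def by auto
  have mem: "y \<in> P \<longleftrightarrow> y \<in> Q" if "y \<in> SS" for y
  proof -
    obtain r v z where v: "int_vec v" and z: "int_vec z" and y: "y = r *\<^sub>R v + z"
      using \<open>y \<in> SS\<close> unfolding SS_def by blast
    obtain M :: nat where M: "R + norm y + \<bar>r\<bar> + 1 < real M" using reals_Archimedean2 by blast
    define t where "t = r + real M"
    define w where "w = real M *\<^sub>R v - z"
    have t: "t > 0" "t > R + norm y"
      using M R(1) norm_ge_zero[of y] abs_ge_minus_self[of r] unfolding t_def by linarith+
    have wi: "int_vec w" unfolding w_def by (intro int_vec_diff int_vec_nat_scale v z)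
    have e: "t *\<^sub>R v - w = y" unfolding t_def w_def y by (simp add: algebra_simps)
    have "ehrhart ((\<lambda>x. x + w) ` P) (1/t) = ehrhart ((\<lambda>x. x + w) ` Q) (1/t)"
      by (rule assms(5)[OF wi]) (use t in simp)
    moreover have "ehrhart ((\<lambda>x. x + w) ` P) (1/t) = (if y \<in> P then 1 else 0)"
      by (rule ehrhart_point[OF _ v t e]) (use R(2) in blast)
    moreover have "ehrhart ((\<lambda>x. x + w) ` Q) (1/t) = (if y \<in> Q then 1 else 0)"
      by (rule ehrhart_point[OF _ v t e]) (use R(2) in blast)
    ultimately show ?thesis by (cases "y \<in> P"; cases "y \<in> Q") simp_all
  qed
  have PQ: "P \<inter> SS = Q \<inter> SS" using mem by blast
  have "P \<subseteq> Q"
  proof -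
    have "P \<subseteq> closure (P \<inter> SS)" by (rule dense_SS[OF pP dP])
    also have "\<dots> = closure (Q \<inter> SS)" using PQ by simp
    also have "\<dots> \<subseteq> Q" by (rule closure_minimal[OF Int_lower1 clQ])
    finally show ?thesis .
  qed
  moreover have "Q \<subseteq> P"
  proof -
    have "Q \<subseteq> closure (Q \<inter> SS)" by (rule dense_SS[OF pQ dQ])
    also have "\<dots> = closure (P \<inter> SS)" using PQ by simp
    also have "\<dots> \<subseteq> P" by (rule closure_minimal[OF Int_lower1 clP])
    finally show ?thesis .
  qed
  ultimately show ?thesis by blast
qed

end
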